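(* Let $(M,\Sigma_M,\mu,T)$ be an ergodic measure-preserving deterministic system. Assume there do not exist $n\in\mathbb{N}$ and $C\in\Sigma_M$ with $0<\mu(C)<1$ such that $\mu\big(T^n(C)\,\triangle\, C\big)=0$. Let $\Phi:M\to M_O$ be any nontrivial finite-valued observation function, and let $Z_t:=\Phi\circ T^t$, $t\in\mathbb{Z}$. Then there is an observed value $o_i\in M_O$ such that for every $o_j\in M_O$ and every $t\in\mathbb{Z}$, $$P\{Z_{t+1}=o_j\mid Z_t=o_i\}:=\frac{\mu(\{m: \Phi(T^{t}m)=o_i,\ \Phi(T^{t+1}m)=o_j\})}{\mu(\{m:\Phi(T^t m)=o_i\})}<1.$$
   Context: A deterministic system is a quadruple $(M,\Sigma_M,\mu,T)$ where $(M,\Sigma_M,\mu)$ is a (complete) probability space and $T:M\to M$ is a bijection such that $T$ and $T^{-1}$ are measurable. It is measure-preserving if $\mu(T(A))=\mu(A)$ for all $A\in\Sigma_M$. It is ergodic if every $A\in\Sigma_M$ with $\mu(T(A)\triangle A)=0$ has $\mu(A)\in\{0,1\}$ (equivalently, $\lim_{n\to\infty}\frac1n\sum_{i=0}^{n-1}(\mu(T^i(A)\cap B)-\mu(A)\mu(B))=0$ for all $A,B\in\Sigma_M$). A partition of $(M,\Sigma_M,\mu)$ is a finite set $\alpha=\{\alpha_1,\dots,\alpha_n\}$ of pairwise disjoint sets $\alpha_i\in\Sigma_M$ with $\mu(\alpha_i)>0$ and $\bigcup_i\alpha_i=M$; it is nontrivial if $n\ge 2$. A finite-valued observation function is a map $\Phi=\sum_{i=1}^n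 o_i\chi_{\alpha_i}$ for some partition $\alpha$ and distinct values $o_1,\dots,o_n$, with $M_O=\{o_1,\dots,o_n\}$; it is nontrivial if its partition is nontrivial. *)

theory Defs
  imports "HOL-Probability.Probability"
begin

definition det_system :: "'a measure \<Rightarrow> ('a \<Rightarrow> 'a) \<Rightarrow> bool" where
  "det_system M T \<longleftrightarrow> prob_space M \<and> complete_measure M \<and>
     bij_betw T (space M) (space M) \<and> T \<in> M \<rightarrow>\<^sub>M M \<and>
     the_inv_into (space M) T \<in> M \<rightarrow>\<^sub>M M"

definition measure_preserving :: "'a measure \<Rightarrow> ('a \<Rightarrow> 'a) \<Rightarrow> bool" where
  "measure_preserving M T \<longleftrightarrow> (\<forall>A\<in>sets M. measure M (T ` A) = measure M A)"

definition symdiff :: "'a set \<Rightarrow> 'a set \<Rightarrow> 'a set" where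
  "symdiff A B = (A - B) \<union> (B - A)"

definition ergodic :: "'a measure \<Rightarrow> ('a \<Rightarrow> 'a) \<Rightarrow> bool" where
  "ergodic M T \<longleftrightarrow> (\<forall>A\<in>sets M. measure M (symdiff (T ` A) A) = 0 \<longrightarrow>
                       measure M A = 0 \<or> measure M A = 1)"

definition Tpow :: "'a measure \<Rightarrow> ('a \<Rightarrow> 'a) \<Rightarrow> int \<Rightarrow> 'a \<Rightarrow> 'a" where
  "Tpow M T t = (if 0 \<le> t then T ^^ nat t else (the_inv_into (space M) T) ^^ nat (- t))"

definition partition :: "'a measure \<Rightarrow> 'a set set \<Rightarrow> bool" where
  "partition M \<alpha> \<longleftrightarrow> finite \<alpha> \<and> \<alpha> \<subseteq> sets M \<and>
     (\<forall>A\<in>\<alpha>. \<forall>B\<in>\<alpha>. A \<noteq> B \<longrightarrow> A \<inter> B = {}) \<and>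
     (\<forall>A\<in>\<alpha>. measure M A > 0) \<and> \<Union>\<alpha> = space M"

definition finite_obs :: "'a measure \<Rightarrow> 'a set set \<Rightarrow> ('a \<Rightarrow> real) \<Rightarrow> bool" where
  "finite_obs M \<alpha> \<Phi> \<longleftrightarrow> partition M \<alpha> \<and>
     (\<exists>val. inj_on val \<alpha> \<and> (\<forall>x\<in>space M. \<Phi> x = (\<Sum>A\<in>\<alpha>. val A * indicator A x)))"

definition nontrivial_finite_obs :: "'a measure \<Rightarrow> ('a \<Rightarrow> real) \<Rightarrow> bool" where
  "nontrivial_finite_obs M \<Phi> \<longleftrightarrow> (\<exists>\<alpha>. finite_obs M \<alpha> \<Phi> \<and> card \<alpha> \<ge> 2)"

end

theory Submission
  imports Defs
begin

locale ds = prob_space M for M :: "'a measure" +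
  fixes T :: "'a \<Rightarrow> 'a"
  assumes bij: "bij_betw T (space M) (space M)"
    and Tm: "T \<in> M \<rightarrow>\<^sub>M M"
    and Im: "the_inv_into (space M) T \<in> M \<rightarrow>\<^sub>M M"
    and mp: "\<forall>A\<in>sets M. measure M (T ` A) = measure M A"
begin

abbreviation "I \<equiv> the_inv_into (space M) T"

lemma inj: "inj_on T (space M)" using bij bij_betw_def by blast

lemma img_eq: assumes "X \<subseteq> space M" shows "T ` X = I -` X \<inter> space M"
proof
  show "T ` X \<subseteq> I -` X \<inter> space M"
    using assms inj bij by (auto simp: the_inv_into_f_f bij_betw_def)
  show "I -` X \<inter> space M \<subseteq> T ` X"
  proof
    fix y assume y: "y \<in> I -` X \<inter> space M"
    then have "T (I y) = y" using bij by (simp add: f_the_inv_into_f_bij_betw)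
    then show "y \<in> T ` X" using y by (metis IntD1 image_eqI vimageE)
  qed
qed

lemma img_sets: assumes X: "X \<in> sets M" shows "T ` X \<in> sets M"
proof -
  have "X \<subseteq> space M" using X sets.sets_into_space by blast
  then have "T ` X = I -` X \<inter> space M" by (rule img_eq)
  then show ?thesis using measurable_sets[OF Im X] by simp
qed

lemma T_space: "x \<in> space M \<Longrightarrow> T x \<in> space M"
  by (rule measurable_space[OF Tm])

lemma I_space: "x \<in> space M \<Longrightarrow> I x \<in> space M"
  by (rule measurable_space[OF Im])

lemma pre_T: "B \<in> sets M \<Longrightarrow> measure M (T -` B \<inter> space M) = measure M B"
proof -
  assume B: "B \<in> sets M"
  have Bs: "B \<subseteq> T ` space M" using bij sets.sets_into_space[OF B] by (auto simp: bij_betw_def)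
  have "T ` (T -` B \<inter> space M) = B"
    using Bs by blast
  moreover have "T -` B \<inter> space M \<in> sets M" using Tm B by measurable
  ultimately show ?thesis using mp by metis
qed

lemma pre_I: assumes B: "B \<in> sets M" shows "measure M (I -` B \<inter> space M) = measure M B"
proof -
  have "B \<subseteq> space M" using B sets.sets_into_space by blast
  then have "T ` B = I -` B \<inter> space M" by (rule img_eq)
  then show ?thesis using mp B by metis
qed

lemma pow_pres:
  assumes f: "f \<in> M \<rightarrow>\<^sub>M M" and p: "\<And>B. B \<in> sets M \<Longrightarrow> measure M (f -` B \<inter> space M) = measure M B"
  shows "(f ^^ n) \<in> M \<rightarrow>\<^sub>M M \<and> (\<forall>B\<in>sets M. measure M ((f ^^ n) -` B \<inter> space M) = measure M B)"
proof (induction n)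
  case 0 then show ?case by (simp add: vimage_def Int_absorb1 sets.sets_into_space)
next
  case (Suc n)
  have m: "(f ^^ Suc n) \<in> M \<rightarrow>\<^sub>M M" using Suc f by (simp add: measurable_comp)
  moreover have "\<forall>B\<in>sets M. measure M ((f ^^ Suc n) -` B \<inter> space M) = measure M B"
  proof
    fix B assume B: "B \<in> sets M"
    have e: "(f ^^ Suc n) -` B \<inter> space M = (f ^^ n) -` (f -` B \<inter> space M) \<inter> space M"
      using measurable_space[OF Suc[THEN conjunct1]] by auto
    have fB: "f -` B \<inter> space M \<in> sets M" using f B by measurable
    have h: "measure M ((f ^^ n) -` (f -` B \<inter> space M) \<inter> space M) = measure M (f -` B \<inter> space M)"
      using Suc fB by blast
    show "measure M ((f ^^ Suc n) -` B \<inter> space M) = measure M B"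
      unfolding e by (metis h p[OF B])
  qed
  ultimately show ?case by blast
qed

lemma Tpow_pres: "Tpow M T t \<in> M \<rightarrow>\<^sub>M M \<and> (\<forall>B\<in>sets M. measure M (Tpow M T t -` B \<inter> space M) = measure M B)"
  unfolding Tpow_def using pow_pres[OF Tm pre_T] pow_pres[OF Im pre_I] by auto

lemma Tpow_space: "m \<in> space M \<Longrightarrow> Tpow M T t m \<in> space M"
  by (rule measurable_space[OF Tpow_pres[THEN conjunct1]])

lemma Tpow_Suc: assumes "m \<in> space M" shows "Tpow M T (t + 1) m = T (Tpow M T t m)"
proof (cases "0 \<le> t")
  case True
  then have "nat (t+1) = Suc (nat t)" by simp
  then show ?thesis using True by (simp add: Tpow_def)
next
  case False
  define n where "n = nat (-t) - 1"
  have n: "t = - int (Suc n)" using False by (simp add: n_def)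
  then have t1: "t + 1 = - int n" by simp
  have sp: "(I ^^ n) m \<in> space M"
    by (rule measurable_space[OF pow_pres[OF Im pre_I, of n, THEN conjunct1] assms])
  have a: "Tpow M T (t+1) = I ^^ n" unfolding Tpow_def using t1 by (cases "n = 0") auto
  have nn: "nat (- t) = Suc n" using n by simp
  have b: "Tpow M T t = I ^^ Suc n" unfolding Tpow_def using False nn by simp
  show ?thesis by (simp add: a b f_the_inv_into_f_bij_betw[OF bij sp])
qed


lemma sub: "A \<in> sets M \<Longrightarrow> B \<in> sets M \<Longrightarrow> measure M (A \<union> B) \<le> measure M A + measure M B"
  by (rule measure_subadditive) (auto simp: emeasure_finite)

lemma symdiff_step:
  assumes X: "X \<in> sets M" and Y: "Y \<in> sets M" and Z: "Z \<in> sets M"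
    and h1: "measure M (symdiff X Y) = 0" and h2: "measure M (symdiff (T ` Y) Z) = 0"
  shows "measure M (symdiff (T ` X) Z) = 0"
proof -
  have sXY: "symdiff X Y \<in> sets M" using X Y by (simp add: symdiff_def)
  have subs: "symdiff (T ` X) Z \<subseteq> T ` (symdiff X Y) \<union> symdiff (T ` Y) Z"
    unfolding symdiff_def by blast
  have s1: "T ` (symdiff X Y) \<in> sets M" by (rule img_sets[OF sXY])
  have s2: "symdiff (T ` Y) Z \<in> sets M" using img_sets[OF Y] Z by (simp add: symdiff_def)
  have "measure M (T ` (symdiff X Y)) = 0" using mp sXY h1 by simp
  then have "measure M (symdiff (T ` X) Z) \<le> 0 + 0"
    using finite_measure_mono[OF subs] s1 s2 sub[OF s1 s2] h2 by simp
  then show ?thesis using measure_nonneg[of M "symdiff (T ` X) Z"] by linarith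
qed

lemma fstep:
  assumes A: "A \<in> sets M" and B: "B \<in> sets M" and z: "measure M (T ` A - B) = 0"
  shows "measure M A \<le> measure M B"
    and "measure M B \<le> measure M A \<Longrightarrow> measure M (symdiff (T ` A) B) = 0"
proof -
  have TA: "T ` A \<in> sets M" by (rule img_sets[OF A])
  have e1: "measure M (T ` A) = measure M (T ` A \<inter> B)"
    using finite_measure_Diff'[OF TA B] z by simp
  have le: "measure M (T ` A \<inter> B) \<le> measure M B" using B by (intro finite_measure_mono) auto
  show "measure M A \<le> measure M B" using e1 le mp A by simp
  assume "measure M B \<le> measure M A"
  have "measure M (B - T ` A) = measure M B - measure M (B \<inter> T ` A)"
    using finite_measure_Diff'[OF B TA] .
  also have "\<dots> \<le> 0" using e1 mp A \<open>measure M B \<le> measure M A\<close> by (simp add: Int_commute)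
  finally have z2: "measure M (B - T ` A) \<le> 0" .
  have "measure M (symdiff (T ` A) B) \<le> measure M (T ` A - B) + measure M (B - T ` A)"
    unfolding symdiff_def using TA B by (intro sub) auto
  then show "measure M (symdiff (T ` A) B) = 0"
    using z z2 measure_nonneg[of M "symdiff (T ` A) B"] by linarith
qed

lemma good:
  assumes part: "partition M \<alpha>" and card: "card \<alpha> \<ge> 2"
    and noper: "\<not> (\<exists>n::nat. \<exists>C\<in>sets M. n \<ge> 1 \<and> 0 < measure M C \<and> measure M C < 1 \<and>
                 measure M (symdiff ((T ^^ n) ` C) C) = 0)"
  shows "\<exists>A\<in>\<alpha>. \<forall>B\<in>\<alpha>. measure M (T ` A - B) > 0"
proof (rule ccontr)
  assume "\<not> ?thesis"
  then have "\<forall>A\<in>\<alpha>. \<exists>B\<in>\<alpha>. measure M (T ` A - B) = 0"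
    using measure_nonneg by (metis not_less order.antisym)
  then obtain f where f: "\<And>A. A \<in> \<alpha> \<Longrightarrow> f A \<in> \<alpha> \<and> measure M (T ` A - f A) = 0"
    by metis
  have fin: "finite \<alpha>" and sets: "\<alpha> \<subseteq> sets M" and pos: "\<And>A. A \<in> \<alpha> \<Longrightarrow> measure M A > 0"
    and disj: "\<And>A B. A \<in> \<alpha> \<Longrightarrow> B \<in> \<alpha> \<Longrightarrow> A \<noteq> B \<Longrightarrow> A \<inter> B = {}"
    using part unfolding partition_def by auto
  have ne: "\<alpha> \<noteq> {}" using card by auto
  define m where "m = Max (measure M ` \<alpha>)"
  have "m \<in> measure M ` \<alpha>" unfolding m_def using fin ne by (intro Max_in) auto
  then obtain A0 where A0: "A0 \<in> \<alpha>" "measure M A0 = m" by auto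
  have mx: "\<And>A. A \<in> \<alpha> \<Longrightarrow> measure M A \<le> m" unfolding m_def using fin by (intro Max_ge) auto
  define a where "a k = (f ^^ k) A0" for k
  have aS: "a (Suc k) = f (a k)" for k unfolding a_def by simp
  have ain: "a k \<in> \<alpha> \<and> measure M (a k) = m" for k
  proof (induction k)
    case 0 then show ?case using A0 by (simp add: a_def)
  next
    case (Suc k)
    have i: "a (Suc k) \<in> \<alpha>" using f Suc aS by simp
    have "measure M (a k) \<le> measure M (a (Suc k))"
      using fstep(1)[of "a k" "a (Suc k)"] Suc i sets f aS by auto
    then show ?case using i mx[OF i] Suc by simp
  qed
  have sd: "measure M (symdiff (T ` a k) (a (Suc k))) = 0" for k
    using fstep(2)[of "a k" "a (Suc k)"] ain[of k] ain[of "Suc k"] sets f[of "a k"] aS by auto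
  have "\<not> inj a"
  proof
    assume "inj a"
    then have "infinite (range a)" by (rule range_inj_infinite)
    moreover have "range a \<subseteq> \<alpha>" using ain by auto
    ultimately show False using fin finite_subset by blast
  qed
  then obtain p q where pq: "a p = a q" "p \<noteq> q" unfolding inj_def by blast
  define p' where "p' = min p q"
  define n where "n = max p q - min p q"
  have n1: "n \<ge> 1" using pq(2) by (simp add: n_def)
  have pn: "a (p' + n) = a p'" using pq by (auto simp: p'_def n_def min_def max_def)
  define C where "C = a p'"
  have C: "C \<in> sets M" "C \<in> \<alpha>" using ain sets by (auto simp: C_def)
  have chain: "(T ^^ k) ` C \<in> sets M \<and> measure M (symdiff ((T ^^ k) ` C) (a (p' + k))) = 0" for k
  proof (induction k)
    case 0 then show ?case using C by (simp add: symdiff_def C_def)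
  next
    case (Suc k)
    have X: "(T ^^ Suc k) ` C = T ` ((T ^^ k) ` C)" by (simp add: image_comp)
    have s: "(T ^^ Suc k) ` C \<in> sets M" using X img_sets Suc by simp
    have "measure M (symdiff (T ` ((T ^^ k) ` C)) (a (Suc (p' + k)))) = 0"
      using symdiff_step[of "(T ^^ k) ` C" "a (p' + k)" "a (Suc (p' + k))"] Suc ain sets sd by blast
    then show ?case using X s by simp
  qed
  have m0: "0 < measure M C" using pos C by simp
  obtain B where B: "B \<in> \<alpha>" "B \<noteq> C"
  proof -
    have "\<alpha> - {C} \<noteq> {}"
    proof
      assume "\<alpha> - {C} = {}"
      then have "\<alpha> \<subseteq> {C}" by blast
      then have "card \<alpha> \<le> card {C}" by (intro card_mono) auto
      then show False using card by simp
    qed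
    then show ?thesis using that by blast
  qed
  have "measure M (C \<union> B) = measure M C + measure M B"
    using disj[OF C(2) B(1)] B C sets by (intro finite_measure_Union) auto
  moreover have "measure M (C \<union> B) \<le> 1" by (rule prob_le_1)
  moreover have "measure M B > 0" using pos B by simp
  ultimately have m1: "measure M C < 1" by simp
  have "measure M (symdiff ((T ^^ n) ` C) C) = 0" using chain[of n] pn by (simp add: C_def)
  then show False using noper n1 C m0 m1 by blast
qed


lemma main:
  fixes \<Phi> :: "'a \<Rightarrow> real" and val :: "'a set \<Rightarrow> real"
  assumes part: "partition M \<alpha>" and val: "inj_on val \<alpha>"
    and Phi: "\<forall>x\<in>space M. \<Phi> x = (\<Sum>A\<in>\<alpha>. val A * indicator A x)"
    and card: "card \<alpha> \<ge> 2"
    and noper: "\<not> (\<exists>n::nat. \<exists>C\<in>sets M. n \<ge> 1 \<and> 0 < measure M C \<and> measure M C < 1 \<and>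
                 measure M (symdiff ((T ^^ n) ` C) C) = 0)"
  shows "\<exists>oi\<in>\<Phi> ` space M. \<forall>oj\<in>\<Phi> ` space M. \<forall>t::int.
           measure M {m \<in> space M. \<Phi> (Tpow M T t m) = oi \<and> \<Phi> (Tpow M T (t + 1) m) = oj}
           / measure M {m \<in> space M. \<Phi> (Tpow M T t m) = oi} < 1"
proof -
  have fin: "finite \<alpha>" and sets: "\<alpha> \<subseteq> sets M" and pos: "\<And>A. A \<in> \<alpha> \<Longrightarrow> measure M A > 0"
    and disj: "\<And>A B. A \<in> \<alpha> \<Longrightarrow> B \<in> \<alpha> \<Longrightarrow> A \<noteq> B \<Longrightarrow> A \<inter> B = {}"
    and cov: "\<Union>\<alpha> = space M"
    using part unfolding partition_def by auto
  have PV: "\<Phi> x = val A" if A: "A \<in> \<alpha>" and x: "x \<in> A" for A x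
  proof -
    have xs: "x \<in> space M" using cov A x by blast
    have "(\<Sum>B\<in>\<alpha>. val B * indicator B x) = val A * indicator A x + (\<Sum>B\<in>\<alpha> - {A}. val B * indicator B x)"
      by (rule sum.remove[OF fin A])
    also have "(\<Sum>B\<in>\<alpha> - {A}. val B * indicator B x) = 0"
    proof (rule sum.neutral, rule ballI)
      fix B assume "B \<in> \<alpha> - {A}"
      then have "x \<notin> B" using disj[of A B] A x by auto
      then show "val B * indicator B x = 0" by simp
    qed
    finally show ?thesis using Phi xs x by simp
  qed
  have lev: "y \<in> space M \<Longrightarrow> A \<in> \<alpha> \<Longrightarrow> \<Phi> y = val A \<longleftrightarrow> y \<in> A" for y A
  proof -
    assume y: "y \<in> space M" and A: "A \<in> \<alpha>"
    then obtain B where B: "B \<in> \<alpha>" "y \<in> B" using cov by blast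
    show "\<Phi> y = val A \<longleftrightarrow> y \<in> A"
      using PV[OF B] PV[OF A] val B A inj_onD[OF val] by metis
  qed
  obtain A where A: "A \<in> \<alpha>" and gA: "\<forall>B\<in>\<alpha>. measure M (T ` A - B) > 0"
    using good[OF part card noper] by blast
  have As: "A \<in> sets M" using A sets by auto
  have Asp: "A \<subseteq> space M" using cov A by blast
  have "A \<noteq> {}" using pos[OF A] by auto
  then obtain x0 where x0: "x0 \<in> A" by auto
  have oi: "val A \<in> \<Phi> ` space M" using PV[OF A x0] Asp x0 by force
  show ?thesis
  proof (rule bexI[OF _ oi], intro ballI allI)
    fix oj t assume "oj \<in> \<Phi> ` space M"
    then obtain y where y: "y \<in> space M" "oj = \<Phi> y" by auto
    then obtain B where B: "B \<in> \<alpha>" "y \<in> B" using cov by blast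
    have oj: "oj = val B" using PV[OF B] y by simp
    have Bs: "B \<in> sets M" using B sets by auto
    have Bsp: "B \<subseteq> space M" using cov B by blast
    define S where "S = Tpow M T t"
    have Sm: "S \<in> M \<rightarrow>\<^sub>M M" and Sp: "\<And>X. X \<in> sets M \<Longrightarrow> measure M (S -` X \<inter> space M) = measure M X"
      using Tpow_pres unfolding S_def by auto
    define X where "X = T -` B \<inter> space M"
    have Xs: "X \<in> sets M" unfolding X_def using Tm Bs by measurable
    have AX: "A \<inter> X \<in> sets M" using As Xs by auto
    have num: "{m \<in> space M. \<Phi> (Tpow M T t m) = val A \<and> \<Phi> (Tpow M T (t + 1) m) = oj}
              = S -` (A \<inter> X) \<inter> space M"
    proof -
      have iff: "(\<Phi> (Tpow M T t m) = val A \<and> \<Phi> (Tpow M T (t + 1) m) = oj) \<longleftrightarrow> S m \<in> A \<inter> X"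
        if m: "m \<in> space M" for m
      proof -
        have e: "Tpow M T (t + 1) m = T (S m)" using Tpow_Suc[OF m] by (simp add: S_def)
        have Sm: "S m \<in> space M" using Tpow_space[OF m] by (simp add: S_def)
        show ?thesis unfolding e oj S_def[symmetric]
          using lev[OF Sm A] lev[OF T_space[OF Sm] B(1)] Sm by (auto simp: X_def)
      qed
      then show ?thesis by blast
    qed
    have den: "{m \<in> space M. \<Phi> (Tpow M T t m) = val A} = S -` A \<inter> space M"
      using lev[OF Tpow_space A] unfolding S_def by blast
    have BT: "B \<subseteq> T ` space M" using bij Bsp by (simp add: bij_betw_def)
    have TX: "T ` X = B" unfolding X_def using BT by blast
    have "T ` A - B = T ` (A - X)"
      using inj_on_image_set_diff[OF inj, of A X] Asp TX by (auto simp: X_def)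
    then have "measure M (T ` A - B) = measure M (A - X)" using mp As Xs by simp
    also have "\<dots> = measure M A - measure M (A \<inter> X)" by (rule finite_measure_Diff'[OF As Xs])
    finally have lt: "measure M (A \<inter> X) < measure M A" using gA B by fastforce
    show "measure M {m \<in> space M. \<Phi> (Tpow M T t m) = val A \<and> \<Phi> (Tpow M T (t + 1) m) = oj}
           / measure M {m \<in> space M. \<Phi> (Tpow M T t m) = val A} < 1"
      unfolding num den Sp[OF AX] Sp[OF As] using lt pos[OF A] by simp
  qed
qed

end

theorem proposition1:
  fixes M :: "'a measure" and T :: "'a \<Rightarrow> 'a" and \<Phi> :: "'a \<Rightarrow> real"
  assumes "det_system M T"
    and "measure_preserving M T"
    and "ergodic M T"
    and "\<not> (\<exists>n::nat. \<exists>C\<in>sets M. n \<ge> 1 \<and> 0 < measure M C \<and> measure M C < 1 \<and>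
                 measure M (symdiff ((T ^^ n) ` C) C) = 0)"
    and "nontrivial_finite_obs M \<Phi>"
  shows "\<exists>oi\<in>\<Phi> ` space M. \<forall>oj\<in>\<Phi> ` space M. \<forall>t::int.
           measure M {m \<in> space M. \<Phi> (Tpow M T t m) = oi \<and> \<Phi> (Tpow M T (t + 1) m) = oj}
           / measure M {m \<in> space M. \<Phi> (Tpow M T t m) = oi} < 1"
proof -
  interpret ds M T
    using assms(1,2) unfolding det_system_def measure_preserving_def ds_def ds_axioms_def by auto
  obtain \<alpha> val where "partition M \<alpha>" "inj_on val \<alpha>"
    "\<forall>x\<in>space M. \<Phi> x = (\<Sum>A\<in>\<alpha>. val A * indicator A x)" "card \<alpha> \<ge> 2"
    using assms(5) unfolding nontrivial_finite_obs_def finite_obs_def by blast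
  then show ?thesis using main assms(4) by blast
qed

end
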